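(* Let $\Omega\subset\mathbb{R}^3$ be open, let $x\in\Omega$ and $0<r<\operatorname{dist}(x,\partial\Omega)$. Let $u\in C^2(\Omega)^3$ satisfy $\nabla\cdot u=0$, let $v\in\mathbb{R}^3$, and let $p$ be a (classical) solution of $-\Delta p=\nabla\cdot(u\cdot\nabla u)$ in $\Omega$. Then $$p(x)+\tfrac13|u(x)-v|^2=\overline{p}(x,r)+\fint_{|\xi|=1}\big|\xi\cdot(u(x+r\xi)-v)\big|^2dS(\xi)+\int_0^r\frac{d\rho}{\rho}\fint_{|\xi|=1}\Big[3\big|\xi\cdot(u(x+\rho\xi)-v)\big|^2-|u(x+\rho\xi)-v|^2\Big]dS(\xi).$$
   Context: For a function $f$, $\overline{f}(x,r)=\frac{1}{4\pi r^2}\int_{|x-y|=r}f(y)\,dS(y)=\fint_{|\xi|=1}f(x+r\xi)\,dS(\xi)$ denotes the spherical average, where $\fint$ denotes the integral over the unit sphere divided by its area $4\pi$. *)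

theory Defs
  imports "HOL-Analysis.Analysis"
begin

definition partial :: "3 \<Rightarrow> (real^3 \<Rightarrow> real) \<Rightarrow> real^3 \<Rightarrow> real" where
  "partial i f y = deriv (\<lambda>t. f (y + t *\<^sub>R axis i 1)) 0"

definition C2_on :: "(real^3) set \<Rightarrow> (real^3 \<Rightarrow> real) \<Rightarrow> bool" where
  "C2_on S f \<longleftrightarrow>
     continuous_on S f \<and>
     (\<forall>i. \<forall>y\<in>S. (\<lambda>t. f (y + t *\<^sub>R axis i 1)) differentiable (at 0)) \<and>
     (\<forall>i. continuous_on S (partial i f)) \<and>
     (\<forall>i j. \<forall>y\<in>S. (\<lambda>t. partial i f (y + t *\<^sub>R axis j 1)) differentiable (at 0)) \<and>
     (\<forall>i j. continuous_on S (partial j (partial i f)))"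

definition laplacian :: "(real^3 \<Rightarrow> real) \<Rightarrow> real^3 \<Rightarrow> real" where
  "laplacian f y = (\<Sum>i\<in>UNIV. partial i (partial i f) y)"

definition divergence :: "(real^3 \<Rightarrow> real^3) \<Rightarrow> real^3 \<Rightarrow> real" where
  "divergence u y = (\<Sum>i\<in>UNIV. partial i (\<lambda>z. u z $ i) y)"

definition convective :: "(real^3 \<Rightarrow> real^3) \<Rightarrow> real^3 \<Rightarrow> real^3" where
  "convective u y = (\<chi> i. \<Sum>j\<in>UNIV. u y $ j * partial j (\<lambda>z. u z $ i) y)"

definition sph :: "real \<Rightarrow> real \<Rightarrow> real^3" where
  "sph th ph = vector [sin th * cos ph, sin th * sin ph, cos th]"

text \<open>Average over the unit sphere S^2 with respect to surface measure, divided by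
  its area 4 pi, computed via the spherical-coordinate parametrisation
  (surface element sin th dth dph).\<close>
definition sphere_avg :: "(real^3 \<Rightarrow> real) \<Rightarrow> real" where
  "sphere_avg g = (integral {0..2*pi} (\<lambda>ph. integral {0..pi} (\<lambda>th. g (sph th ph) * sin th))) / (4*pi)"

definition sph_mean :: "(real^3 \<Rightarrow> real) \<Rightarrow> real^3 \<Rightarrow> real \<Rightarrow> real" where
  "sph_mean f x r = sphere_avg (\<lambda>\<xi>. f (x + r *\<^sub>R \<xi>))"

end

theory Submission
  imports Defs
begin

lemma partial_has_deriv:
  fixes f :: "real^3 \<Rightarrow> real"
  assumes "(\<lambda>t. f (z + t *\<^sub>R axis i 1)) differentiable (at 0)"
  shows "((\<lambda>t. f (z + t *\<^sub>R axis i 1)) has_real_derivative partial i f z) (at 0)"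
  using assms unfolding partial_def
  by (simp add: DERIV_deriv_iff_real_differentiable)

lemma partial_has_deriv_shift:
  fixes f :: "real^3 \<Rightarrow> real"
  assumes "(\<lambda>t. f ((z + s *\<^sub>R axis i 1) + t *\<^sub>R axis i 1)) differentiable (at 0)"
  shows "((\<lambda>t. f (z + t *\<^sub>R axis i 1)) has_real_derivative partial i f (z + s *\<^sub>R axis i 1)) (at s)"
proof -
  have "((\<lambda>t. f ((z + s *\<^sub>R axis i 1) + t *\<^sub>R axis i 1)) has_real_derivative partial i f (z + s *\<^sub>R axis i 1)) (at 0)"
    by (rule partial_has_deriv[OF assms])
  then have "((\<lambda>t. f (z + (t + s) *\<^sub>R axis i 1)) has_real_derivative partial i f (z + s *\<^sub>R axis i 1)) (at 0)"
    by (simp add: scaleR_add_left add.assoc add.commute add.left_commute)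
  then show ?thesis using DERIV_shift[where z=s and x=0 and f="\<lambda>t. f (z + t *\<^sub>R axis i 1)"] by simp
qed

lemma partial_from_deriv:
  fixes g :: "real^3 \<Rightarrow> real"
  assumes "(g has_derivative (\<lambda>h. a \<bullet> h)) (at y)"
  shows "partial j g y = a $ j"
proof -
  have d1: "((\<lambda>t. y + t *\<^sub>R axis j 1) has_derivative (\<lambda>t. t *\<^sub>R axis j 1)) (at 0)"
    by (auto intro!: derivative_eq_intros)
  have "(g has_derivative (\<lambda>h. a \<bullet> h)) (at (y + 0 *\<^sub>R axis j 1))" using assms by simp
  from has_derivative_compose[OF d1 this]
  have "((\<lambda>t. g (y + t *\<^sub>R axis j 1)) has_derivative (\<lambda>t. a \<bullet> (t *\<^sub>R axis j 1))) (at 0)"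
    by (simp add: o_def)
  moreover have "(\<lambda>t. a \<bullet> (t *\<^sub>R axis j 1)) = (*) (a $ j)"
    by (auto simp: inner_axis mult.commute)
  ultimately have "((\<lambda>t. g (y + t *\<^sub>R axis j 1)) has_real_derivative a $ j) (at 0)"
    by (simp add: has_field_derivative_def)
  then show ?thesis unfolding partial_def by (rule DERIV_imp_deriv)
qed

lemma step_bound:
  fixes f :: "real^3 \<Rightarrow> real"
  assumes dif: "\<forall>z\<in>B. (\<lambda>t. f (z + t *\<^sub>R axis i 1)) differentiable (at 0)"
    and bnd: "\<forall>z\<in>B. \<bar>partial i f z - P\<bar> \<le> e"
    and seg: "\<And>t. t \<in> closed_segment 0 c \<Longrightarrow> z + t *\<^sub>R axis i 1 \<in> B"
  shows "\<bar>f (z + c *\<^sub>R axis i 1) - f z - c * P\<bar> \<le> e * \<bar>c\<bar>"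
proof -
  let ?g = "\<lambda>t. f (z + t *\<^sub>R axis i 1) - t * P"
  have "norm (?g c - ?g 0) \<le> e * norm (c - 0)"
  proof (rule field_differentiable_bound[where S="closed_segment 0 c" and f'="\<lambda>t. partial i f (z + t *\<^sub>R axis i 1) - P"])
    show "convex (closed_segment 0 c)" by simp
    fix t assume t: "t \<in> closed_segment (0::real) c"
    have zt: "z + t *\<^sub>R axis i 1 \<in> B" using seg t by blast
    have "(\<lambda>s. f ((z + t *\<^sub>R axis i 1) + s *\<^sub>R axis i 1)) differentiable (at 0)"
      using dif zt by blast
    from partial_has_deriv_shift[OF this]
    have "((\<lambda>t. f (z + t *\<^sub>R axis i 1)) has_real_derivative partial i f (z + t *\<^sub>R axis i 1)) (at t)" .
    moreover have "((\<lambda>t. t * P) has_real_derivative P) (at t)"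
      using DERIV_cmult_right[OF DERIV_ident, of P t] by simp
    ultimately have "(?g has_field_derivative partial i f (z + t *\<^sub>R axis i 1) - P) (at t)"
      by (rule DERIV_diff)
    then show "(?g has_field_derivative partial i f (z + t *\<^sub>R axis i 1) - P) (at t within closed_segment 0 c)"
      by (rule has_field_derivative_at_within)
    show "norm (partial i f (z + t *\<^sub>R axis i 1) - P) \<le> e" using bnd zt by auto
  qed auto
  then show ?thesis by (simp add: algebra_simps)
qed

lemma partials_frechet:
  fixes f :: "real^3 \<Rightarrow> real"
  assumes S: "open S" and y: "y \<in> S"
    and dif: "\<forall>i. \<forall>z\<in>S. (\<lambda>t. f (z + t *\<^sub>R axis i 1)) differentiable (at 0)"
    and cont: "\<forall>i. continuous_on S (partial i f)"
  shows "(f has_derivative (\<lambda>h. (\<chi> i. partial i f y) \<bullet> h)) (at y)"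
  unfolding has_derivative_at_alt
proof (intro conjI allI impI)
  show "bounded_linear ((\<bullet>) (\<chi> i. partial i f y))" by (rule bounded_linear_inner_right)
  fix e :: real assume e: "e > 0"
  obtain d0 where d0: "d0 > 0" "ball y d0 \<subseteq> S" using S y open_contains_ball by blast
  have "\<exists>d>0. \<forall>z\<in>S. dist z y < d \<longrightarrow> dist (partial i f z) (partial i f y) < e/3" for i
  proof -
    have e3: "e/3 > 0" using e by simp
    have "continuous_on S (partial i f)" using cont by blast
    then show ?thesis using y e3 unfolding continuous_on_iff by blast
  qed
  then obtain dd where dd: "\<And>i. dd i > 0" "\<And>i z. z \<in> S \<Longrightarrow> dist z y < dd i \<Longrightarrow> dist (partial i f z) (partial i f y) < e/3"
    by metis
  define d where "d = min d0 (min (dd 1) (min (dd 2) (dd 3)))"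
  have dpos: "d > 0" using d0 dd unfolding d_def by auto
  define B where "B = ball y d"
  have BS: "B \<subseteq> S" using d0 unfolding B_def d_def by auto
  have bnd: "\<forall>z\<in>B. \<bar>partial i f z - partial i f y\<bar> \<le> e/3" for i
  proof
    fix z assume z: "z \<in> B"
    have "dd i \<ge> d" unfolding d_def using exhaust_3[of i] by auto
    then have "dist z y < dd i" using z unfolding B_def by (auto simp: dist_commute)
    then show "\<bar>partial i f z - partial i f y\<bar> \<le> e/3" using dd(2)[of z i] z BS by (auto simp: dist_real_def)
  qed
  have difB: "\<forall>z\<in>B. (\<lambda>t. f (z + t *\<^sub>R axis i 1)) differentiable (at 0)" for i using dif BS by blast
  show "\<exists>d>0. \<forall>y'. norm (y' - y) < d \<longrightarrow>
          norm (f y' - f y - (\<chi> i. partial i f y) \<bullet> (y' - y)) \<le> e * norm (y' - y)"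
  proof (intro exI[of _ "d/3"] conjI allI impI)
    show "d/3 > 0" using dpos by simp
    fix y' assume yy: "norm (y' - y) < d/3"
    define h where "h = y' - y"
    have hn: "\<bar>h $ i\<bar> \<le> norm h" for i by (rule component_le_norm_cart)
    define z1 where "z1 = y + (h$1) *\<^sub>R axis 1 1"
    define z2 where "z2 = z1 + (h$2) *\<^sub>R axis 2 1"
    have z3: "z2 + (h$3) *\<^sub>R axis 3 1 = y'"
      unfolding z2_def z1_def h_def by (simp add: vec_eq_iff forall_3 axis_def)
    have nax: "norm (c *\<^sub>R axis k (1::real)) = \<bar>c\<bar>" for c and k::3 by simp
    have inB: "w \<in> B" if "norm (w - y) < d" for w using that unfolding B_def by (simp add: dist_norm norm_minus_commute)
    have segt: "\<bar>t\<bar> \<le> \<bar>c\<bar>" if "t \<in> closed_segment 0 c" for t c :: real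
      using that by (auto simp: closed_segment_eq_real_ivl split: if_splits)
    have s1: "\<bar>f z1 - f y - h$1 * partial 1 f y\<bar> \<le> e/3 * \<bar>h$1\<bar>"
      unfolding z1_def
    proof (rule step_bound[OF difB bnd])
      fix t assume "t \<in> closed_segment 0 (h$1)"
      then have "\<bar>t\<bar> \<le> norm h" using segt hn by (meson order_trans)
      then show "y + t *\<^sub>R axis 1 1 \<in> B" using yy h_def nax by (intro inB) auto
    qed
    have s2: "\<bar>f z2 - f z1 - h$2 * partial 2 f y\<bar> \<le> e/3 * \<bar>h$2\<bar>"
      unfolding z2_def
    proof (rule step_bound[OF difB bnd])
      fix t assume "t \<in> closed_segment 0 (h$2)"
      then have "\<bar>t\<bar> \<le> norm h" using segt hn by (meson order_trans)
      moreover have "norm (z1 + t *\<^sub>R axis 2 1 - y) \<le> \<bar>h$1\<bar> + \<bar>t\<bar>"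
        unfolding z1_def using norm_triangle_ineq[of "h$1 *\<^sub>R axis (1::3) (1::real)" "t *\<^sub>R axis (2::3) 1"] nax
        by (simp add: algebra_simps)
      ultimately show "z1 + t *\<^sub>R axis 2 1 \<in> B" using yy h_def hn[of 1] by (intro inB) auto
    qed
    have s3: "\<bar>f y' - f z2 - h$3 * partial 3 f y\<bar> \<le> e/3 * \<bar>h$3\<bar>"
      unfolding z3[symmetric]
    proof (rule step_bound[OF difB bnd])
      fix t assume "t \<in> closed_segment 0 (h$3)"
      then have "\<bar>t\<bar> \<le> norm h" using segt hn by (meson order_trans)
      moreover have "norm (z2 + t *\<^sub>R axis 3 1 - y) \<le> \<bar>h$1\<bar> + \<bar>h$2\<bar> + \<bar>t\<bar>"
        unfolding z2_def z1_def
        using norm_triangle_ineq[of "h$1 *\<^sub>R axis (1::3) (1::real)" "h$2 *\<^sub>R axis (2::3) 1"]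
          norm_triangle_ineq[of "h$1 *\<^sub>R axis (1::3) (1::real) + h$2 *\<^sub>R axis (2::3) 1" "t *\<^sub>R axis (3::3) 1"] nax
        by (simp add: algebra_simps)
      ultimately show "z2 + t *\<^sub>R axis 3 1 \<in> B" using yy h_def hn[of 1] hn[of 2] by (intro inB) auto
    qed
    have eq: "(\<chi> i. partial i f y) \<bullet> (y' - y) = h$1 * partial 1 f y + h$2 * partial 2 f y + h$3 * partial 3 f y"
      unfolding h_def by (simp add: inner_vec_def sum_3 mult.commute)
    have "\<bar>f y' - f y - (\<chi> i. partial i f y) \<bullet> (y' - y)\<bar> \<le> e/3 * \<bar>h$1\<bar> + e/3 * \<bar>h$2\<bar> + e/3 * \<bar>h$3\<bar>"
      unfolding eq using s1 s2 s3 by linarith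
    also have "\<dots> \<le> e/3 * norm h + e/3 * norm h + e/3 * norm h"
      using hn[of 1] hn[of 2] hn[of 3] e by (intro add_mono mult_left_mono; simp)
    also have "\<dots> = e * norm (y' - y)" unfolding h_def by simp
    finally show "norm (f y' - f y - (\<chi> i. partial i f y) \<bullet> (y' - y)) \<le> e * norm (y' - y)"
      by simp
  qed
qed


definition K :: "(real \<times> real) set" where "K = cbox (0,0) (2*pi, pi)"

lemma sph_comp [simp]: "sph th ph $ 1 = sin th * cos ph" "sph th ph $ 2 = sin th * sin ph" "sph th ph $ 3 = cos th"
  unfolding sph_def by simp_all

lemma sph_eq: "sph th ph = (sin th * cos ph) *\<^sub>R axis 1 1 + (sin th * sin ph) *\<^sub>R axis 2 1 + cos th *\<^sub>R axis 3 1"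
  by (simp add: vec_eq_iff forall_3 axis_def)

lemma sph_inner: "sph th ph \<bullet> sph th ph = 1"
  unfolding inner_vec_def sum_3 sph_comp inner_real_def
  using sin_cos_squared_add[of th] sin_cos_squared_add[of ph] by algebra

lemma norm_sph [simp]: "norm (sph th ph) = 1"
  by (simp add: norm_eq_sqrt_inner sph_inner)

lemma sph_sphere [simp]: "sph th ph \<in> sphere 0 1"
  by simp

lemma cont_sph [continuous_intros]:
  fixes f g :: "'a::metric_space \<Rightarrow> real"
  assumes "continuous_on S f" "continuous_on S g"
  shows "continuous_on S (\<lambda>x. sph (f x) (g x))"
  unfolding sph_eq using assms by (intro continuous_intros)

lemma avg2:
  assumes "continuous_on (sphere 0 1) g"
  shows "sphere_avg g = integral K (\<lambda>t. g (sph (snd t) (fst t)) * sin (snd t)) / (4*pi)"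
proof -
  have c1: "continuous_on K (\<lambda>t. sph (snd t) (fst t))" by (intro continuous_intros)
  have "continuous_on K (\<lambda>t. g (sph (snd t) (fst t)))"
    by (rule continuous_on_compose2[OF assms c1]) auto
  then have c: "continuous_on (cbox (0,0) (2*pi,pi)) (\<lambda>t. g (sph (snd t) (fst t)) * sin (snd t))"
    unfolding K_def by (intro continuous_intros)
  show ?thesis
    unfolding sphere_avg_def K_def integral_prod_continuous[OF c] by (simp add: cbox_interval)
qed

lemma avg_cong: "(\<And>\<xi>. \<xi> \<in> sphere 0 1 \<Longrightarrow> g \<xi> = g' \<xi>) \<Longrightarrow> sphere_avg g = sphere_avg g'"
  unfolding sphere_avg_def by (intro arg_cong[where f="\<lambda>x. x / (4*pi)"] integral_cong) simp

lemma avg_cmult: "sphere_avg (\<lambda>\<xi>. c * g \<xi>) = c * sphere_avg g"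
  unfolding sphere_avg_def by (simp add: mult.assoc)

lemma avg_add:
  assumes "continuous_on (sphere 0 1) g1" "continuous_on (sphere 0 1) g2"
  shows "sphere_avg (\<lambda>\<xi>. g1 \<xi> + g2 \<xi>) = sphere_avg g1 + sphere_avg g2"
proof -
  have c1: "continuous_on K (\<lambda>t. sph (snd t) (fst t))" by (intro continuous_intros)
  have i: "(\<lambda>t. g (sph (snd t) (fst t)) * sin (snd t)) integrable_on K" if "continuous_on (sphere 0 1) g" for g
  proof -
    have "continuous_on K (\<lambda>t. g (sph (snd t) (fst t)))"
      by (rule continuous_on_compose2[OF that c1]) auto
    then have "continuous_on K (\<lambda>t. g (sph (snd t) (fst t)) * sin (snd t))"
      by (intro continuous_intros)
    then show ?thesis unfolding K_def by (rule integrable_continuous)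
  qed
  have c3: "continuous_on (sphere 0 1) (\<lambda>\<xi>. g1 \<xi> + g2 \<xi>)" using assms by (intro continuous_intros)
  show ?thesis
    unfolding avg2[OF assms(1)] avg2[OF assms(2)] avg2[OF c3]
    using integral_add[OF i[OF assms(1)] i[OF assms(2)]]
    by (simp add: distrib_right add_divide_distrib)
qed

lemma avg_diff:
  assumes "continuous_on (sphere 0 1) g1" "continuous_on (sphere 0 1) g2"
  shows "sphere_avg (\<lambda>\<xi>. g1 \<xi> - g2 \<xi>) = sphere_avg g1 - sphere_avg g2"
proof -
  have c: "continuous_on (sphere 0 1) (\<lambda>\<xi>. (-1) * g2 \<xi>)" using assms by (intro continuous_intros)
  have "sphere_avg (\<lambda>\<xi>. g1 \<xi> - g2 \<xi>) = sphere_avg (\<lambda>\<xi>. g1 \<xi> + (-1) * g2 \<xi>)" by simp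
  also have "\<dots> = sphere_avg g1 - sphere_avg g2" using avg_add[OF assms(1) c] avg_cmult[of "-1" g2] by simp
  finally show ?thesis .
qed

lemma avg_deriv:
  assumes U: "convex U" "r0 \<in> U"
    and d: "\<And>r \<xi>. r \<in> U \<Longrightarrow> \<xi> \<in> sphere 0 1 \<Longrightarrow> ((\<lambda>r. h r \<xi>) has_real_derivative h' r \<xi>) (at r within U)"
    and c': "continuous_on (U \<times> sphere 0 1) (\<lambda>(r,\<xi>). h' r \<xi>)"
    and c: "\<And>r. r \<in> U \<Longrightarrow> continuous_on (sphere 0 1) (h r)"
  shows "((\<lambda>r. sphere_avg (h r)) has_real_derivative sphere_avg (h' r0)) (at r0 within U)"
proof -
  define f where "f = (\<lambda>r t. h r (sph (snd t) (fst t)) * sin (snd t))"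
  define fx where "fx = (\<lambda>r t. h' r (sph (snd t) (fst t)) * sin (snd t))"
  have c1: "continuous_on K (\<lambda>t. sph (snd t) (fst t))" by (intro continuous_intros)
  have cm: "continuous_on (U \<times> K) (\<lambda>z. (fst z, sph (snd (snd z)) (fst (snd z))))"
    by (intro continuous_intros)
  have "continuous_on (U \<times> K) (\<lambda>z. (\<lambda>(r,\<xi>). h' r \<xi>) (fst z, sph (snd (snd z)) (fst (snd z))))"
    by (rule continuous_on_compose2[OF c' cm]) auto
  then have "continuous_on (U \<times> K) (\<lambda>z. h' (fst z) (sph (snd (snd z)) (fst (snd z))) * sin (snd (snd z)))"
    by (intro continuous_intros) simp
  then have cfx: "continuous_on (U \<times> cbox (0,0) (2*pi,pi)) (\<lambda>(r, t). fx r t)"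
    unfolding fx_def K_def by (simp add: split_beta)
  have int: "f r integrable_on cbox (0,0) (2*pi,pi)" if "r \<in> U" for r
  proof -
    have "continuous_on K (\<lambda>t. h r (sph (snd t) (fst t)))"
      by (rule continuous_on_compose2[OF c[OF that] c1]) auto
    then have "continuous_on K (f r)" unfolding f_def by (intro continuous_intros)
    then show ?thesis unfolding K_def by (rule integrable_continuous)
  qed
  have dd: "((\<lambda>r. f r t) has_real_derivative fx r t) (at r within U)" if "r \<in> U" "t \<in> cbox (0,0) (2*pi,pi)" for r t
    unfolding f_def fx_def by (intro DERIV_cmult_right d that) simp
  have "((\<lambda>r. integral (cbox (0,0) (2*pi,pi)) (f r)) has_real_derivative integral (cbox (0,0) (2*pi,pi)) (fx r0)) (at r0 within U)"
    by (rule leibniz_rule_field_derivative[OF dd int cfx U(2) U(1)])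
  then have D: "((\<lambda>r. integral K (f r) / (4*pi)) has_real_derivative integral K (fx r0) / (4*pi)) (at r0 within U)"
    unfolding K_def by (rule DERIV_cdivide)
  have h'c: "continuous_on (sphere 0 1) (h' r0)"
  proof -
    have "continuous_on (sphere 0 1) (\<lambda>\<xi>. (\<lambda>(r,\<xi>). h' r \<xi>) (r0, \<xi>))"
      by (rule continuous_on_compose2[OF c']) (auto intro!: continuous_intros U)
    then show ?thesis by simp
  qed
  show ?thesis
    using has_field_derivative_transform_within[OF D zero_less_one U(2), of "\<lambda>r. sphere_avg (h r)"]
    unfolding avg2[OF h'c] fx_def f_def using avg2[OF c] by (simp add: U(2))
qed


definition eth :: "real \<Rightarrow> real \<Rightarrow> real^3" where
  "eth th ph = vector [cos th * cos ph, cos th * sin ph, - sin th]"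
definition eph :: "real \<Rightarrow> real^3" where
  "eph ph = vector [- sin ph, cos ph, 0]"
definition mcp :: "real \<Rightarrow> real^3" where
  "mcp ph = vector [- cos ph, - sin ph, 0]"

lemma vec3_eq: "(vector [a, b, c] :: real^3) = a *\<^sub>R axis 1 1 + b *\<^sub>R axis 2 1 + c *\<^sub>R axis 3 1"
  by (simp add: vec_eq_iff forall_3 axis_def)

lemma eth_comp [simp]: "eth th ph $ 1 = cos th * cos ph" "eth th ph $ 2 = cos th * sin ph" "eth th ph $ 3 = - sin th"
  unfolding eth_def by simp_all
lemma eph_comp [simp]: "eph ph $ 1 = - sin ph" "eph ph $ 2 = cos ph" "eph ph $ 3 = 0"
  unfolding eph_def by simp_all
lemma mcp_comp [simp]: "mcp ph $ 1 = - cos ph" "mcp ph $ 2 = - sin ph" "mcp ph $ 3 = 0"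
  unfolding mcp_def by simp_all

lemma sph_dth: "((\<lambda>th. sph th ph) has_vector_derivative eth th ph) (at th)"
  unfolding sph_def eth_def vec3_eq
  by (auto intro!: derivative_eq_intros simp: algebra_simps)

lemma sph_dph: "((\<lambda>ph. sph th ph) has_vector_derivative (sin th) *\<^sub>R eph ph) (at ph)"
  unfolding sph_def eph_def vec3_eq
  by (auto intro!: derivative_eq_intros simp: algebra_simps)

lemma chain_path:
  fixes g :: "real^3 \<Rightarrow> real"
  assumes "(g has_derivative (\<lambda>h. a \<bullet> h)) (at (\<gamma> t))"
    and "(\<gamma> has_vector_derivative d) (at t)"
  shows "((\<lambda>t. g (\<gamma> t)) has_real_derivative a \<bullet> d) (at t)"
proof -
  have g1: "(\<gamma> has_derivative (\<lambda>s. s *\<^sub>R d)) (at t)" using assms(2) by (simp add: has_vector_derivative_def)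
  from has_derivative_compose[OF g1 assms(1)]
  have "((\<lambda>t. g (\<gamma> t)) has_derivative (\<lambda>s. a \<bullet> (s *\<^sub>R d))) (at t)" by (simp add: o_def)
  moreover have "(\<lambda>s. a \<bullet> (s *\<^sub>R d)) = (*) (a \<bullet> d)" by (auto simp: mult.commute)
  ultimately show ?thesis by (simp add: has_field_derivative_def)
qed

lemma line_vd: "((\<lambda>r. x + r *\<^sub>R \<xi>) has_vector_derivative \<xi>) (at r)"
  by (auto intro!: derivative_eq_intros)


locale vf =
  fixes S :: "(real^3) set" and x :: "real^3" and R :: real
    and F :: "real^3 \<Rightarrow> real^3" and G :: "3 \<Rightarrow> real^3 \<Rightarrow> real^3"
  assumes S_open: "open S" and R_pos: "R > 0" and ballS: "ball x R \<subseteq> S"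
    and dF: "\<And>k y. y \<in> S \<Longrightarrow> ((\<lambda>y. F y $ k) has_derivative (\<lambda>h. G k y \<bullet> h)) (at y)"
    and cG: "\<And>k. continuous_on S (G k)"
begin

definition U :: "real set" where "U = {-R<..<R}"

lemma U_open: "open U" and U_convex: "convex U"
  unfolding U_def by auto

lemma inS: "r \<in> U \<Longrightarrow> norm \<xi> = 1 \<Longrightarrow> x + r *\<^sub>R \<xi> \<in> S"
  using ballS unfolding U_def by (auto simp: dist_norm)

lemma cFk: "continuous_on S (\<lambda>y. F y $ k)"
  using dF S_open
  by (auto simp: continuous_on_eq_continuous_at intro: has_derivative_continuous)

lemma cF: "continuous_on S F"
proof -
  have "continuous_on S (\<lambda>y. \<chi> k. F y $ k)" by (intro continuous_on_vec_lambda allI cFk)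
  then show ?thesis by simp
qed

lemma cG_comp: "continuous_on T \<gamma> \<Longrightarrow> (\<And>t. t \<in> T \<Longrightarrow> \<gamma> t \<in> S) \<Longrightarrow> continuous_on T (\<lambda>t. G k (\<gamma> t))"
  by (rule continuous_on_compose2[OF cG]) auto

lemma cF_comp: "continuous_on T \<gamma> \<Longrightarrow> (\<And>t. t \<in> T \<Longrightarrow> \<gamma> t \<in> S) \<Longrightarrow> continuous_on T (\<lambda>t. F (\<gamma> t))"
  by (rule continuous_on_compose2[OF cF]) auto

lemma dF_path:
  assumes "\<gamma> t \<in> S" "(\<gamma> has_vector_derivative d) (at t)"
  shows "((\<lambda>t. F (\<gamma> t) $ k) has_real_derivative G k (\<gamma> t) \<bullet> d) (at t)"
  using chain_path[where g="\<lambda>y. F y $ k" and \<gamma>=\<gamma>, OF dF[OF assms(1)] assms(2)] .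

lemma inner_sum: "a \<bullet> (b::real^3) = (\<Sum>k\<in>UNIV. a $ k * b $ k)"
  by (simp add: inner_vec_def)

lemma Phi_deriv:
  assumes "r0 \<in> U"
  shows "((\<lambda>r. sphere_avg (\<lambda>\<xi>. \<xi> \<bullet> F (x + r *\<^sub>R \<xi>))) has_real_derivative
           sphere_avg (\<lambda>\<xi>. \<Sum>k\<in>UNIV. \<xi> $ k * (G k (x + r0 *\<^sub>R \<xi>) \<bullet> \<xi>))) (at r0)"
proof -
  have cl: "continuous_on (U \<times> sphere 0 1) (\<lambda>z. x + fst z *\<^sub>R snd z)" by (intro continuous_intros)
  have clS: "\<And>z. z \<in> U \<times> sphere 0 1 \<Longrightarrow> x + fst z *\<^sub>R snd z \<in> S" using inS by auto
  have "((\<lambda>r. sphere_avg (\<lambda>\<xi>. \<Sum>k\<in>UNIV. \<xi> $ k * F (x + r *\<^sub>R \<xi>) $ k)) has_real_derivative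
           sphere_avg (\<lambda>\<xi>. \<Sum>k\<in>UNIV. \<xi> $ k * (G k (x + r0 *\<^sub>R \<xi>) \<bullet> \<xi>))) (at r0 within U)"
  proof (rule avg_deriv[OF U_convex assms])
    fix r \<xi> assume r: "r \<in> U" and \<xi>: "\<xi> \<in> (sphere 0 1 :: (real^3) set)"
    have "((\<lambda>r. F (x + r *\<^sub>R \<xi>) $ k) has_real_derivative G k (x + r *\<^sub>R \<xi>) \<bullet> \<xi>) (at r)" for k
      using dF_path[where \<gamma>="\<lambda>r. x + r *\<^sub>R \<xi>", OF _ line_vd] inS r \<xi> by simp
    then have "((\<lambda>r. \<Sum>k\<in>UNIV. \<xi> $ k * F (x + r *\<^sub>R \<xi>) $ k) has_real_derivative
                 (\<Sum>k\<in>UNIV. \<xi> $ k * (G k (x + r *\<^sub>R \<xi>) \<bullet> \<xi>))) (at r)"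
      by (intro DERIV_sum DERIV_cmult) auto
    then show "((\<lambda>r. \<Sum>k\<in>UNIV. \<xi> $ k * F (x + r *\<^sub>R \<xi>) $ k) has_real_derivative
                 (\<Sum>k\<in>UNIV. \<xi> $ k * (G k (x + r *\<^sub>R \<xi>) \<bullet> \<xi>))) (at r within U)"
      by (rule has_field_derivative_at_within)
  next
    have "continuous_on (U \<times> sphere 0 1) (\<lambda>z. G k (x + fst z *\<^sub>R snd z))" for k
      by (rule cG_comp[OF cl clS])
    then have "continuous_on (U \<times> sphere 0 1) (\<lambda>z. \<Sum>k\<in>UNIV. snd z $ k * (G k (x + fst z *\<^sub>R snd z) \<bullet> snd z))"
      by (intro continuous_intros) auto
    then show "continuous_on (U \<times> sphere 0 1) (\<lambda>(r, \<xi>). \<Sum>k\<in>UNIV. \<xi> $ k * (G k (x + r *\<^sub>R \<xi>) \<bullet> \<xi>))"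
      by (simp add: split_beta)
  next
    fix r assume r: "r \<in> U"
    have "continuous_on (sphere 0 1) (\<lambda>\<xi>. F (x + r *\<^sub>R \<xi>))"
      by (rule cF_comp) (auto intro!: continuous_intros inS r)
    then show "continuous_on (sphere 0 1) (\<lambda>\<xi>. \<Sum>k\<in>UNIV. \<xi> $ k * F (x + r *\<^sub>R \<xi>) $ k)"
      by (intro continuous_intros) auto
  qed
  then show ?thesis
    using at_within_open[OF assms U_open] by (simp add: inner_sum)
qed

lemma cont_eph [continuous_intros]:
  fixes f :: "'a::metric_space \<Rightarrow> real"
  shows "continuous_on T f \<Longrightarrow> continuous_on T (\<lambda>t. eph (f t))"
  unfolding eph_def vec3_eq by (intro continuous_intros)

lemma T_identity:
  assumes r: "r \<in> U"
  shows "r * sphere_avg (\<lambda>\<xi>. \<Sum>k\<in>UNIV. G k (x + r *\<^sub>R \<xi>) $ k)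
       = 2 * sphere_avg (\<lambda>\<xi>. \<xi> \<bullet> F (x + r *\<^sub>R \<xi>))
       + r * sphere_avg (\<lambda>\<xi>. \<Sum>k\<in>UNIV. \<xi> $ k * (G k (x + r *\<^sub>R \<xi>) \<bullet> \<xi>))"
proof -
  define A1 where "A1 = (\<lambda>\<xi>. \<Sum>k\<in>UNIV. G k (x + r *\<^sub>R \<xi>) $ k)"
  define A2 where "A2 = (\<lambda>\<xi>::real^3. \<xi> \<bullet> F (x + r *\<^sub>R \<xi>))"
  define A3 where "A3 = (\<lambda>\<xi>. \<Sum>k\<in>UNIV. \<xi> $ k * (G k (x + r *\<^sub>R \<xi>) \<bullet> \<xi>))"
  define Ig where "Ig = (\<lambda>\<xi>. r * A1 \<xi> - 2 * A2 \<xi> - r * A3 \<xi>)"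
  have clS: "continuous_on (sphere 0 1) (\<lambda>\<xi>::real^3. x + r *\<^sub>R \<xi>)" by (intro continuous_intros)
  have inS': "\<And>\<xi>. \<xi> \<in> sphere 0 1 \<Longrightarrow> x + r *\<^sub>R \<xi> \<in> S" using inS r by auto
  have cGs: "continuous_on (sphere 0 1) (\<lambda>\<xi>. G k (x + r *\<^sub>R \<xi>))" for k by (rule cG_comp[OF clS inS'])
  have cFs: "continuous_on (sphere 0 1) (\<lambda>\<xi>. F (x + r *\<^sub>R \<xi>))" by (rule cF_comp[OF clS inS'])
  have c1: "continuous_on (sphere 0 1) (\<lambda>\<xi>. r * A1 \<xi>)" unfolding A1_def using cGs by (intro continuous_intros) auto
  have c2: "continuous_on (sphere 0 1) (\<lambda>\<xi>. 2 * A2 \<xi>)" unfolding A2_def using cFs by (intro continuous_intros) auto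
  have c3: "continuous_on (sphere 0 1) (\<lambda>\<xi>. r * A3 \<xi>)" unfolding A3_def using cGs by (intro continuous_intros) auto
  have c12: "continuous_on (sphere 0 1) (\<lambda>\<xi>. r * A1 \<xi> - 2 * A2 \<xi>)" by (rule continuous_on_diff[OF c1 c2])
  have lin: "sphere_avg Ig = r * sphere_avg A1 - 2 * sphere_avg A2 - r * sphere_avg A3"
    unfolding Ig_def avg_diff[OF c12 c3] avg_diff[OF c1 c2] avg_cmult by simp
  define p where "p = (\<lambda>th ph. x + r *\<^sub>R sph th ph)"
  have pS: "p th ph \<in> S" for th ph using inS r by (simp add: p_def)
  define Fc where "Fc = (\<lambda>k th ph. F (p th ph) $ k)"
  define Dt where "Dt = (\<lambda>k th ph. G k (p th ph) \<bullet> (r *\<^sub>R eth th ph))"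
  define Dp where "Dp = (\<lambda>k th ph. G k (p th ph) \<bullet> (r *\<^sub>R (sin th *\<^sub>R eph ph)))"
  have pvt: "((\<lambda>th. p th ph) has_vector_derivative r *\<^sub>R eth th ph) (at th)" for th ph
    unfolding p_def using sph_dth by (auto intro!: derivative_eq_intros)
  have pvp: "((\<lambda>ph. p th ph) has_vector_derivative r *\<^sub>R (sin th *\<^sub>R eph ph)) (at ph)" for th ph
    unfolding p_def using sph_dph by (auto intro!: derivative_eq_intros)
  have dt: "((\<lambda>th. Fc k th ph) has_real_derivative Dt k th ph) (at th)" for k th ph
    unfolding Fc_def Dt_def by (rule dF_path[where \<gamma>="\<lambda>th. p th ph", OF pS pvt])
  have dp: "((\<lambda>ph. Fc k th ph) has_real_derivative Dp k th ph) (at ph)" for k th ph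
    unfolding Fc_def Dp_def by (rule dF_path[where \<gamma>="\<lambda>ph. p th ph", OF pS pvp])
  define At where "At = (\<lambda>th ph. sin th * (cos th * cos ph * Fc 1 th ph + cos th * sin ph * Fc 2 th ph - sin th * Fc 3 th ph))"
  define Pt where "Pt = (\<lambda>th ph. cos th * (cos th * cos ph * Fc 1 th ph + cos th * sin ph * Fc 2 th ph - sin th * Fc 3 th ph)
       + sin th * (- sin th * cos ph * Fc 1 th ph + cos th * cos ph * Dt 1 th ph - sin th * sin ph * Fc 2 th ph
                   + cos th * sin ph * Dt 2 th ph - cos th * Fc 3 th ph - sin th * Dt 3 th ph))"
  define Bp where "Bp = (\<lambda>th ph. - sin ph * Fc 1 th ph + cos ph * Fc 2 th ph)"
  define Pp where "Pp = (\<lambda>th ph. - cos ph * Fc 1 th ph - sin ph * Dp 1 th ph - sin ph * Fc 2 th ph + cos ph * Dp 2 th ph)"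
  have dAt: "((\<lambda>th. At th ph) has_real_derivative Pt th ph) (at th)" for th ph
    unfolding At_def Pt_def by (auto intro!: derivative_eq_intros dt simp: algebra_simps)
  have dBp: "((\<lambda>ph. Bp th ph) has_real_derivative Pp th ph) (at ph)" for th ph
    unfolding Bp_def Pp_def by (auto intro!: derivative_eq_intros dp simp: algebra_simps)
  have ident: "Ig (sph th ph) * sin th = Pt th ph + Pp th ph" for th ph
  proof -
    have t1: "(sin th)^2 + (cos th)^2 = 1" and t2: "(sin ph)^2 + (cos ph)^2 = 1" by simp_all
    show ?thesis
      unfolding Ig_def A1_def A2_def A3_def Pt_def Pp_def Dt_def Dp_def Fc_def p_def
      apply (simp only: inner_sum sum_3 sph_comp eth_comp eph_comp vector_scaleR_component real_scaleR_def)
      using t1 t2 by algebra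
  qed
  have intT: "((\<lambda>th. Pt th ph) has_integral 0) {0..pi}" for ph
  proof -
    have "((\<lambda>th. Pt th ph) has_integral At pi ph - At 0 ph) {0..pi}"
      by (rule fundamental_theorem_of_calculus)
         (auto simp: has_real_derivative_iff_has_vector_derivative[symmetric]
               intro!: has_field_derivative_at_within dAt)
    then show ?thesis by (simp add: At_def)
  qed
  have per: "p th (2*pi) = p th 0" for th by (simp add: p_def sph_def)
  have intP: "((\<lambda>ph. Pp th ph) has_integral 0) {0..2*pi}" for th
  proof -
    have "((\<lambda>ph. Pp th ph) has_integral Bp th (2*pi) - Bp th 0) {0..2*pi}"
      by (rule fundamental_theorem_of_calculus)
         (auto simp: has_real_derivative_iff_has_vector_derivative[symmetric]
               intro!: has_field_derivative_at_within dBp)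
    then show ?thesis by (simp add: Bp_def Fc_def per)
  qed
  have cp: "continuous_on T (\<lambda>z. p (snd z) (fst z))" for T :: "(real \<times> real) set"
    unfolding p_def by (intro continuous_intros)
  have cPp: "continuous_on (cbox (0,0) (2*pi,pi)) (\<lambda>(ph,th). Pp th ph)"
  proof -
    have a: "continuous_on (cbox (0,0) (2*pi,pi)) (\<lambda>z. F (p (snd z) (fst z)))"
      by (rule cF_comp[OF cp pS])
    have b: "continuous_on (cbox (0,0) (2*pi,pi)) (\<lambda>z. G k (p (snd z) (fst z)))" for k
      by (rule cG_comp[OF cp pS])
    have "continuous_on (cbox (0,0) (2*pi,pi)) (\<lambda>z. Pp (snd z) (fst z))"
      unfolding Pp_def Fc_def Dp_def using a b by (intro continuous_intros)
    then show ?thesis by (simp add: split_beta)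
  qed
  have intPp: "(\<lambda>th. Pp th ph) integrable_on {0..pi}" if "ph \<in> {0..2*pi}" for ph
  proof -
    have "continuous_on {0..pi} (\<lambda>th. (\<lambda>(ph,th). Pp th ph) (ph, th))"
      by (rule continuous_on_compose2[OF cPp]) (use that in \<open>auto intro!: continuous_intros\<close>)
    then show ?thesis by (simp add: integrable_continuous_real)
  qed
  have "integral {0..2*pi} (\<lambda>ph. integral {0..pi} (\<lambda>th. Ig (sph th ph) * sin th))
      = integral {0..2*pi} (\<lambda>ph. integral {0..pi} (\<lambda>th. Pp th ph))"
  proof (rule integral_cong)
    fix ph assume ph: "ph \<in> {0..2*pi}"
    have "integral {0..pi} (\<lambda>th. Ig (sph th ph) * sin th) = integral {0..pi} (\<lambda>th. Pt th ph + Pp th ph)"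
      by (simp add: ident)
    also have "\<dots> = integral {0..pi} (\<lambda>th. Pt th ph) + integral {0..pi} (\<lambda>th. Pp th ph)"
      by (rule integral_add[OF has_integral_integrable[OF intT] intPp[OF ph]])
    also have "\<dots> = integral {0..pi} (\<lambda>th. Pp th ph)" using integral_unique[OF intT] by simp
    finally show "integral {0..pi} (\<lambda>th. Ig (sph th ph) * sin th) = integral {0..pi} (\<lambda>th. Pp th ph)" .
  qed
  also have "\<dots> = integral {0..pi} (\<lambda>th. integral {0..2*pi} (\<lambda>ph. Pp th ph))"
    using integral_swap_continuous[where f="\<lambda>ph th. Pp th ph" and a=0 and c=0 and b="2*pi" and d=pi] cPp
    by (simp add: cbox_interval)
  also have "\<dots> = 0" using integral_unique[OF intP] by simp
  finally have "sphere_avg Ig = 0" unfolding sphere_avg_def by simp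
  then show ?thesis using lin unfolding A1_def A2_def A3_def by simp
qed

lemma flux:
  assumes r: "r \<in> U"
  shows "((\<lambda>r. r^2 * sphere_avg (\<lambda>\<xi>. \<xi> \<bullet> F (x + r *\<^sub>R \<xi>))) has_real_derivative
           r^2 * sphere_avg (\<lambda>\<xi>. \<Sum>k\<in>UNIV. G k (x + r *\<^sub>R \<xi>) $ k)) (at r)"
proof -
  have d1: "((\<lambda>r. r^2) has_real_derivative 2*r) (at r)"
    by (auto intro!: derivative_eq_intros)
  note T = T_identity[OF r]
  show ?thesis
    apply (rule DERIV_cong[OF DERIV_mult[OF d1 Phi_deriv[OF r]]])
    using T by (simp add: power2_eq_square algebra_simps)
qed

lemma flux_zero:
  assumes div0: "\<And>y. y \<in> S \<Longrightarrow> (\<Sum>k\<in>UNIV. G k y $ k) = 0"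
    and r: "r \<in> U" "r \<noteq> 0"
  shows "sphere_avg (\<lambda>\<xi>. \<xi> \<bullet> F (x + r *\<^sub>R \<xi>)) = 0"
proof -
  have z: "sphere_avg (\<lambda>\<xi>. \<Sum>k\<in>UNIV. G k (x + s *\<^sub>R \<xi>) $ k) = 0" if "s \<in> U" for s
  proof -
    have "sphere_avg (\<lambda>\<xi>. \<Sum>k\<in>UNIV. G k (x + s *\<^sub>R \<xi>) $ k) = sphere_avg (\<lambda>\<xi>. 0)"
      by (rule avg_cong) (use div0 inS that in auto)
    then show ?thesis by (simp add: sphere_avg_def)
  qed
  have "\<exists>c. \<forall>s\<in>U. s^2 * sphere_avg (\<lambda>\<xi>. \<xi> \<bullet> F (x + s *\<^sub>R \<xi>)) = c"
  proof (rule has_field_derivative_zero_constant[OF U_convex])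
    fix s assume s: "s \<in> U"
    show "((\<lambda>s. s^2 * sphere_avg (\<lambda>\<xi>. \<xi> \<bullet> F (x + s *\<^sub>R \<xi>))) has_real_derivative 0) (at s within U)"
      using flux[OF s] z[OF s] by (auto intro: has_field_derivative_at_within)
  qed
  then obtain c where c: "\<And>s. s \<in> U \<Longrightarrow> s^2 * sphere_avg (\<lambda>\<xi>. \<xi> \<bullet> F (x + s *\<^sub>R \<xi>)) = c" by blast
  have "0 \<in> U" using R_pos by (simp add: U_def)
  from c[OF this] c[OF r(1)] have "r^2 * sphere_avg (\<lambda>\<xi>. \<xi> \<bullet> F (x + r *\<^sub>R \<xi>)) = 0" by simp
  then show ?thesis using r(2) by simp
qed

end

lemma inner_sum3: "a \<bullet> (b::real^3) = a$1 * b$1 + a$2 * b$2 + a$3 * b$3"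
  by (simp add: inner_vec_def sum_3)

lemma avg_const: "sphere_avg (\<lambda>\<xi>. c) = c"
proof -
  have i: "((\<lambda>th. c * sin th) has_integral 2*c) {0..pi}"
  proof -
    have "((\<lambda>th. c * sin th) has_integral (- c * cos pi) - (- c * cos 0)) {0..pi}"
      by (rule fundamental_theorem_of_calculus)
         (auto simp: has_real_derivative_iff_has_vector_derivative[symmetric]
               intro!: derivative_eq_intros)
    then show ?thesis by simp
  qed
  show ?thesis
    unfolding sphere_avg_def integral_unique[OF i] by simp
qed

lemma avg_sq: "sphere_avg (\<lambda>\<xi>. (\<xi> \<bullet> a)^2) = (norm a)^2 / 3"
proof -
  define I where "I = (\<lambda>ph. ((a$1)^2 * (cos ph)^2 + (a$2)^2 * (sin ph)^2 + 2 * a$1 * a$2 * cos ph * sin ph) * (4/3) + (a$3)^2 * (2/3))"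
  have inner: "((\<lambda>th. (sph th ph \<bullet> a)^2 * sin th) has_integral I ph) {0..pi}" for ph
  proof -
    define P where "P = (\<lambda>th. ((a$1)^2 * (cos ph)^2 + (a$2)^2 * (sin ph)^2 + 2 * a$1 * a$2 * cos ph * sin ph) * (- cos th + (cos th)^3 / 3)
        - (a$3)^2 * (cos th)^3 / 3 + 2 * a$3 * (a$1 * cos ph + a$2 * sin ph) * (sin th)^3 / 3)"
    define K where "K = (a$1)^2 * (cos ph)^2 + (a$2)^2 * (sin ph)^2 + 2 * a$1 * a$2 * cos ph * sin ph"
    have d: "(P has_real_derivative (sph th ph \<bullet> a)^2 * sin th) (at th)" for th
    proof -
      have t: "(sin th)^2 + (cos th)^2 = 1" by simp
      have "(P has_real_derivative K * (sin th - (cos th)^2 * sin th) + (a$3)^2 * (cos th)^2 * sin th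
              + 2 * a$3 * (a$1 * cos ph + a$2 * sin ph) * (sin th)^2 * cos th) (at th)"
        unfolding P_def K_def by (auto intro!: derivative_eq_intros simp: power2_eq_square power3_eq_cube algebra_simps)
      moreover have "K * (sin th - (cos th)^2 * sin th) + (a$3)^2 * (cos th)^2 * sin th
              + 2 * a$3 * (a$1 * cos ph + a$2 * sin ph) * (sin th)^2 * cos th = (sph th ph \<bullet> a)^2 * sin th"
        unfolding K_def inner_sum3 sph_comp using t by algebra
      ultimately show ?thesis by simp
    qed
    have "((\<lambda>th. (sph th ph \<bullet> a)^2 * sin th) has_integral P pi - P 0) {0..pi}"
      by (rule fundamental_theorem_of_calculus)
         (auto simp: has_real_derivative_iff_has_vector_derivative[symmetric]
               intro!: has_field_derivative_at_within d)
    moreover have "P pi - P 0 = I ph" unfolding P_def I_def by (simp add: power3_eq_cube algebra_simps)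
    ultimately show ?thesis by simp
  qed
  define Q where "Q = (\<lambda>ph. (4/3) * ((a$1)^2 * (ph/2 + sin ph * cos ph / 2) + (a$2)^2 * (ph/2 - sin ph * cos ph / 2)
        + a$1 * a$2 * (sin ph)^2) + (2/3) * (a$3)^2 * ph)"
  have dQ: "(Q has_real_derivative I ph) (at ph)" for ph
  proof -
    have t: "(sin ph)^2 + (cos ph)^2 = 1" by simp
    have "(Q has_real_derivative (4/3) * ((a$1)^2 * (1/2 + ((cos ph)^2 - (sin ph)^2)/2) + (a$2)^2 * (1/2 - ((cos ph)^2 - (sin ph)^2)/2)
        + a$1 * a$2 * (2 * sin ph * cos ph)) + (2/3) * (a$3)^2) (at ph)"
      unfolding Q_def by (auto intro!: derivative_eq_intros simp: power2_eq_square algebra_simps) algebra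
    moreover have "(4/3) * ((a$1)^2 * (1/2 + ((cos ph)^2 - (sin ph)^2)/2) + (a$2)^2 * (1/2 - ((cos ph)^2 - (sin ph)^2)/2)
        + a$1 * a$2 * (2 * sin ph * cos ph)) + (2/3) * (a$3)^2 = I ph"
      unfolding I_def using t by algebra
    ultimately show ?thesis by simp
  qed
  have "(I has_integral Q (2*pi) - Q 0) {0..2*pi}"
    by (rule fundamental_theorem_of_calculus)
       (auto simp: has_real_derivative_iff_has_vector_derivative[symmetric]
             intro!: has_field_derivative_at_within dQ)
  moreover have "Q (2*pi) - Q 0 = (4*pi/3) * ((a$1)^2 + (a$2)^2 + (a$3)^2)"
    unfolding Q_def by (simp add: algebra_simps)
  ultimately have iI: "integral {0..2*pi} I = (4*pi/3) * ((a$1)^2 + (a$2)^2 + (a$3)^2)"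
    by (simp add: integral_unique)
  have n: "(norm a)^2 = (a$1)^2 + (a$2)^2 + (a$3)^2"
    unfolding power2_norm_eq_inner inner_sum3 by (simp add: power2_eq_square)
  show ?thesis
    unfolding sphere_avg_def integral_unique[OF inner] iI n by simp
qed


definition grad :: "(real^3 \<Rightarrow> real) \<Rightarrow> real^3 \<Rightarrow> real^3" where
  "grad f y = (\<chi> i. partial i f y)"

lemma grad_comp [simp]: "grad f y $ i = partial i f y"
  by (simp add: grad_def)

lemma C2_cont: "C2_on S f \<Longrightarrow> continuous_on S f"
  unfolding C2_on_def by blast

lemma C2_cp: "C2_on S f \<Longrightarrow> continuous_on S (partial i f)"
  unfolding C2_on_def by blast

lemma C2_d1: "open S \<Longrightarrow> C2_on S f \<Longrightarrow> y \<in> S \<Longrightarrow> (f has_derivative (\<lambda>h. grad f y \<bullet> h)) (at y)"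
  unfolding grad_def by (rule partials_frechet) (auto simp: C2_on_def)

lemma C2_d2: "open S \<Longrightarrow> C2_on S f \<Longrightarrow> y \<in> S \<Longrightarrow> (partial i f has_derivative (\<lambda>h. grad (partial i f) y \<bullet> h)) (at y)"
  unfolding grad_def by (rule partials_frechet) (auto simp: C2_on_def)

lemma C2_c1: "C2_on S f \<Longrightarrow> continuous_on S (grad f)"
  unfolding grad_def C2_on_def by (intro continuous_on_vec_lambda) auto

lemma C2_c2: "C2_on S f \<Longrightarrow> continuous_on S (grad (partial i f))"
  unfolding grad_def C2_on_def by (intro continuous_on_vec_lambda) auto

lemma d_coord: "((\<lambda>y. (y - x) $ k) has_derivative (\<lambda>h. axis k 1 \<bullet> h)) (at y)"
proof -
  have e: "(\<lambda>y. (y - x) $ k) = (\<lambda>y. (y - x) \<bullet> axis k 1)" by (simp add: inner_axis)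
  have "((\<lambda>y. (y - x) \<bullet> axis k 1) has_derivative (\<lambda>h. (h - 0) \<bullet> axis k 1)) (at y)"
    by (intro has_derivative_inner_left has_derivative_diff has_derivative_ident has_derivative_const)
  then show ?thesis unfolding e by (simp add: inner_commute)
qed

lemma ball_bigger:
  fixes x :: "real^3"
  assumes "open \<Omega>" "cball x r \<subseteq> \<Omega>" "0 < r"
  obtains R where "R > r" "ball x R \<subseteq> \<Omega>"
proof -
  obtain e where e: "e > 0" "(\<Union>y\<in>cball x r. ball y e) \<subseteq> \<Omega>"
    using compact_subset_open_imp_ball_epsilon_subset[OF compact_cball assms(1) assms(2)] by blast
  have "ball x (r + e) \<subseteq> \<Omega>"
  proof
    fix y assume y: "y \<in> ball x (r + e)"
    define d where "d = dist x y"
    show "y \<in> \<Omega>"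
    proof (cases "d \<le> r")
      case True
      then have "y \<in> cball x r" by (simp add: d_def)
      then show ?thesis using e by force
    next
      case False
      then have dpos: "d > 0" using assms(3) by simp
      define z where "z = x + (r / d) *\<^sub>R (y - x)"
      have nd: "norm (y - x) = d" by (simp add: d_def dist_norm norm_minus_commute)
      have "dist x z = r" unfolding z_def dist_norm using dpos assms(3) nd by simp
      then have zc: "z \<in> cball x r" by simp
      have "y - z = (1 - r / d) *\<^sub>R (y - x)" unfolding z_def by (simp add: algebra_simps)
      then have "dist z y = (1 - r/d) * d" using nd False dpos
        by (simp add: dist_norm norm_minus_commute[of z y])
      also have "\<dots> = d - r" using dpos by (simp add: field_simps)
      finally have "dist z y < e" using y by (simp add: d_def)
      then show ?thesis using e zc by force
    qed
  qed
  then show ?thesis using that[of "r + e"] e by simp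
qed


theorem lemma2:
  fixes \<Omega> :: "(real^3) set" and x v :: "real^3" and r :: real
    and u :: "real^3 \<Rightarrow> real^3" and p :: "real^3 \<Rightarrow> real"
  assumes "open \<Omega>" and "x \<in> \<Omega>" and "0 < r" and "cball x r \<subseteq> \<Omega>"
    and "\<forall>k. C2_on \<Omega> (\<lambda>y. u y $ k)"
    and "\<forall>y\<in>\<Omega>. divergence u y = 0"
    and "C2_on \<Omega> p"
    and "\<forall>y\<in>\<Omega>. - laplacian p y = divergence (convective u) y"
  shows "p x + (1/3) * (norm (u x - v))\<^sup>2 =
           sph_mean p x r
         + sphere_avg (\<lambda>\<xi>. (\<xi> \<bullet> (u (x + r *\<^sub>R \<xi>) - v))\<^sup>2)
         + integral {0..r} (\<lambda>\<rho>. (1/\<rho>) * sphere_avg (\<lambda>\<xi>.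
              3 * (\<xi> \<bullet> (u (x + \<rho> *\<^sub>R \<xi>) - v))\<^sup>2 - (norm (u (x + \<rho> *\<^sub>R \<xi>) - v))\<^sup>2))"
proof -
  note \<Omega> = assms(1)
  have hu: "\<And>k. C2_on \<Omega> (\<lambda>y. u y $ k)" using assms(5) by blast
  note hp = assms(7)
  obtain R where R: "R > r" "ball x R \<subseteq> \<Omega>" using ball_bigger[OF assms(1,4,3)] by blast
  define gu where "gu = (\<lambda>k y. grad (\<lambda>z. u z $ k) y)"
  have du: "\<And>k y. y \<in> \<Omega> \<Longrightarrow> ((\<lambda>y. u y $ k) has_derivative (\<lambda>h. gu k y \<bullet> h)) (at y)"
    unfolding gu_def using C2_d1[OF \<Omega> hu] by blast
  have d2u: "\<And>i k y. y \<in> \<Omega> \<Longrightarrow> (partial i (\<lambda>z. u z $ k) has_derivative (\<lambda>h. grad (partial i (\<lambda>z. u z $ k)) y \<bullet> h)) (at y)"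
    using C2_d2[OF \<Omega> hu] by blast
  have cu: "\<And>k. continuous_on \<Omega> (\<lambda>y. u y $ k)" using C2_cont[OF hu] by blast
  have cgu: "\<And>k. continuous_on \<Omega> (gu k)" unfolding gu_def using C2_c1[OF hu] by blast
  have cpu: "\<And>i k. continuous_on \<Omega> (partial i (\<lambda>z. u z $ k))" using C2_cp[OF hu] by blast
  have cg2u: "\<And>i k. continuous_on \<Omega> (grad (partial i (\<lambda>z. u z $ k)))" using C2_c2[OF hu] by blast
  have gu_comp: "\<And>k i y. gu k y $ i = partial i (\<lambda>z. u z $ k) y" by (simp add: gu_def)
  have cuv: "continuous_on \<Omega> u"
  proof -
    have "continuous_on \<Omega> (\<lambda>y. \<chi> k. u y $ k)" by (intro continuous_on_vec_lambda allI cu)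
    then show ?thesis by simp
  qed
  define Gc where "Gc = (\<lambda>j y. \<Sum>i\<in>UNIV. u y $ i *\<^sub>R grad (partial i (\<lambda>z. u z $ j)) y + partial i (\<lambda>z. u z $ j) y *\<^sub>R gu i y)"
  have conv_comp: "\<And>j y. convective u y $ j = (\<Sum>i\<in>UNIV. u y $ i * partial i (\<lambda>z. u z $ j) y)"
    by (simp add: convective_def)
  have dconv: "((\<lambda>y. convective u y $ j) has_derivative (\<lambda>h. Gc j y \<bullet> h)) (at y)" if y: "y \<in> \<Omega>" for j y
  proof -
    have "((\<lambda>y. \<Sum>i\<in>UNIV. u y $ i * partial i (\<lambda>z. u z $ j) y) has_derivative
           (\<lambda>h. \<Sum>i\<in>UNIV. u y $ i * (grad (partial i (\<lambda>z. u z $ j)) y \<bullet> h) + (gu i y \<bullet> h) * partial i (\<lambda>z. u z $ j) y)) (at y)"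
      by (intro has_derivative_sum has_derivative_mult du d2u y)
    moreover have "(\<lambda>h. \<Sum>i\<in>UNIV. u y $ i * (grad (partial i (\<lambda>z. u z $ j)) y \<bullet> h) + (gu i y \<bullet> h) * partial i (\<lambda>z. u z $ j) y)
        = (\<lambda>h. Gc j y \<bullet> h)"
      unfolding Gc_def by (auto simp: inner_sum_left inner_add_left algebra_simps)
    ultimately show ?thesis unfolding conv_comp by simp
  qed
  have divconv: "divergence (convective u) y = (\<Sum>j\<in>UNIV. Gc j y $ j)" if "y \<in> \<Omega>" for y
    unfolding divergence_def using partial_from_deriv[OF dconv[OF that]] by simp
  have cGc: "continuous_on \<Omega> (Gc j)" for j
    unfolding Gc_def using cuv cg2u cpu cgu by (intro continuous_intros) auto
  define F1 where "F1 = (\<lambda>y. grad p y + convective u y)"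
  define G1 where "G1 = (\<lambda>j y. grad (partial j p) y + Gc j y)"
  interpret V1: vf \<Omega> x R F1 G1
  proof
    show "open \<Omega>" by fact
    show "R > 0" using R assms(3) by simp
    show "ball x R \<subseteq> \<Omega>" by fact
    fix k y assume y: "y \<in> \<Omega>"
    have "((\<lambda>y. partial k p y + convective u y $ k) has_derivative (\<lambda>h. grad (partial k p) y \<bullet> h + Gc k y \<bullet> h)) (at y)"
      by (intro has_derivative_add C2_d2[OF \<Omega> hp y] dconv y)
    then show "((\<lambda>y. F1 y $ k) has_derivative (\<lambda>h. G1 k y \<bullet> h)) (at y)"
      unfolding F1_def G1_def by (simp add: inner_add_left)
  next
    fix k show "continuous_on \<Omega> (G1 k)" unfolding G1_def using C2_c2[OF hp] cGc by (intro continuous_intros)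
  qed
  have div1: "(\<Sum>k\<in>UNIV. G1 k y $ k) = 0" if "y \<in> \<Omega>" for y
  proof -
    have "(\<Sum>k\<in>UNIV. G1 k y $ k) = laplacian p y + divergence (convective u) y"
      unfolding G1_def laplacian_def divconv[OF that] by (simp add: sum.distrib)
    moreover have "- laplacian p y = divergence (convective u) y" using assms(8) that by blast
    ultimately show ?thesis by linarith
  qed
  have U_eq: "V1.U = {-R<..<R}" by (simp add: V1.U_def)
  have Phi1: "sphere_avg (\<lambda>\<xi>. \<xi> \<bullet> F1 (x + s *\<^sub>R \<xi>)) = 0" if "s \<in> {-R<..<R}" "s \<noteq> 0" for s
    using V1.flux_zero[OF div1] that U_eq by auto

  define w where "w = (\<lambda>y. u y - v)"
  have w_comp: "\<And>y i. w y $ i = u y $ i - v $ i" by (simp add: w_def)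
  have cw: "continuous_on \<Omega> w" unfolding w_def using cuv by (intro continuous_intros)
  define ag where "ag = (\<lambda>y. w y + (\<Sum>k\<in>UNIV. (y - x) $ k *\<^sub>R gu k y))"
  have i3: "\<And>a b :: real^3. a \<bullet> b = a$1 * b$1 + a$2 * b$2 + a$3 * b$3" by (simp add: inner_vec_def sum_3)
  have dxw: "((\<lambda>y. (y - x) \<bullet> w y) has_derivative (\<lambda>h. ag y \<bullet> h)) (at y)" if y: "y \<in> \<Omega>" for y
  proof -
    have e: "(\<lambda>y. (y - x) \<bullet> w y) = (\<lambda>y. \<Sum>k\<in>UNIV. (y - x) $ k * (u y $ k - v $ k))"
      by (simp add: inner_vec_def w_def)
    have "((\<lambda>y. \<Sum>k\<in>UNIV. (y - x) $ k * (u y $ k - v $ k)) has_derivative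
       (\<lambda>h. \<Sum>k\<in>UNIV. (y - x) $ k * (gu k y \<bullet> h - 0) + (axis k 1 \<bullet> h) * (u y $ k - v $ k))) (at y)"
      by (intro has_derivative_sum has_derivative_mult d_coord has_derivative_diff du y has_derivative_const)
    moreover have "(\<lambda>h. \<Sum>k\<in>UNIV. (y - x) $ k * (gu k y \<bullet> h - 0) + (axis k 1 \<bullet> h) * (u y $ k - v $ k)) = (\<lambda>h. ag y \<bullet> h)"
      unfolding ag_def by (rule ext) (simp add: inner_add_left inner_sum_left inner_axis' sum_3 i3[of "w y"] w_comp algebra_simps)
    ultimately show ?thesis unfolding e by simp
  qed
  have cag: "continuous_on \<Omega> ag" unfolding ag_def using cw cgu by (intro continuous_intros)
  define F2 where "F2 = (\<lambda>y. ((y - x) \<bullet> w y) *\<^sub>R u y - (v \<bullet> (y - x)) *\<^sub>R w y)"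
  define G2 where "G2 = (\<lambda>i y. (u y $ i) *\<^sub>R ag y + ((y - x) \<bullet> w y) *\<^sub>R gu i y - (w y $ i) *\<^sub>R v - (v \<bullet> (y - x)) *\<^sub>R gu i y)"
  interpret V2: vf \<Omega> x R F2 G2
  proof
    show "open \<Omega>" by fact
    show "R > 0" using R assms(3) by simp
    show "ball x R \<subseteq> \<Omega>" by fact
    fix k y assume y: "y \<in> \<Omega>"
    have dv: "((\<lambda>y. v \<bullet> (y - x)) has_derivative (\<lambda>h. v \<bullet> (h - 0))) (at y)"
      by (intro has_derivative_inner_right has_derivative_diff has_derivative_ident has_derivative_const)
    have "((\<lambda>y. ((y - x) \<bullet> w y) * u y $ k - (v \<bullet> (y - x)) * (u y $ k - v $ k)) has_derivative
       (\<lambda>h. (((y - x) \<bullet> w y) * (gu k y \<bullet> h) + (ag y \<bullet> h) * u y $ k)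
          - ((v \<bullet> (y - x)) * (gu k y \<bullet> h - 0) + (v \<bullet> (h - 0)) * (u y $ k - v $ k)))) (at y)"
      by (intro has_derivative_diff has_derivative_mult dxw du dv y has_derivative_const)
    moreover have "(\<lambda>h. (((y - x) \<bullet> w y) * (gu k y \<bullet> h) + (ag y \<bullet> h) * u y $ k)
          - ((v \<bullet> (y - x)) * (gu k y \<bullet> h - 0) + (v \<bullet> (h - 0)) * (u y $ k - v $ k))) = (\<lambda>h. G2 k y \<bullet> h)"
      unfolding G2_def by (rule ext) (simp add: inner_add_left inner_diff_left w_comp inner_commute algebra_simps)
    moreover have "(\<lambda>y. F2 y $ k) = (\<lambda>y. ((y - x) \<bullet> w y) * u y $ k - (v \<bullet> (y - x)) * (u y $ k - v $ k))"
      unfolding F2_def by (simp add: w_comp)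
    ultimately show "((\<lambda>y. F2 y $ k) has_derivative (\<lambda>h. G2 k y \<bullet> h)) (at y)" by simp
  next
    fix k show "continuous_on \<Omega> (G2 k)" unfolding G2_def using cuv cag cw cgu by (intro continuous_intros)
  qed
  have div2: "(\<Sum>k\<in>UNIV. G2 k y $ k) = (norm (w y))^2 + (y - x) \<bullet> convective u y" if y: "y \<in> \<Omega>" for y
  proof -
    have d0: "partial 1 (\<lambda>z. u z $ 1) y + partial 2 (\<lambda>z. u z $ 2) y + partial 3 (\<lambda>z. u z $ 3) y = 0"
      using assms(6) y unfolding divergence_def by (simp add: sum_3)
    show ?thesis
      unfolding G2_def ag_def power2_norm_eq_inner
      apply (simp only: sum_3 vector_add_component vector_minus_component vector_scaleR_component i3 conv_comp
            w_comp gu_comp real_scaleR_def)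
      using d0 by algebra
  qed

  define U where "U = {-R<..<R}"
  have U_open: "open U" and U_conv: "convex U" unfolding U_def by auto
  have inS: "\<And>s \<xi>. s \<in> U \<Longrightarrow> \<xi> \<in> sphere 0 1 \<Longrightarrow> x + s *\<^sub>R \<xi> \<in> \<Omega>"
    using V1.inS U_eq unfolding U_def by auto
  have rU: "{0..r} \<subseteq> U" using R assms(3) unfolding U_def by auto
  have ccv: "continuous_on \<Omega> (convective u)"
  proof -
    have "continuous_on \<Omega> (\<lambda>y. \<chi> j. \<Sum>i\<in>UNIV. u y $ i * partial i (\<lambda>z. u z $ j) y)"
      using cuv cpu by (intro continuous_intros) auto
    moreover have "(\<lambda>y. \<chi> j. \<Sum>i\<in>UNIV. u y $ i * partial i (\<lambda>z. u z $ j) y) = convective u"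
      by (rule ext) (simp add: convective_def)
    ultimately show ?thesis by metis
  qed
  have cgp: "continuous_on \<Omega> (grad p)" by (rule C2_c1[OF hp])
  have cpp: "continuous_on \<Omega> p" by (rule C2_cont[OF hp])
  have csph: "continuous_on (sphere 0 1) (\<lambda>\<xi>. f (x + s *\<^sub>R \<xi>))" if "continuous_on \<Omega> f" "s \<in> U" for f :: "real^3 \<Rightarrow> 'b::topological_space" and s
    by (rule continuous_on_compose2[OF that(1)]) (auto intro!: continuous_intros inS that(2))
  have cUS: "continuous_on (U \<times> sphere 0 1) (\<lambda>z. f (x + fst z *\<^sub>R snd z))" if "continuous_on \<Omega> f" for f :: "real^3 \<Rightarrow> 'b::topological_space"
    by (rule continuous_on_compose2[OF that]) (auto intro!: continuous_intros inS)
  define Ab where "Ab = (\<lambda>s. sphere_avg (\<lambda>\<xi>. (\<xi> \<bullet> (u (x + s *\<^sub>R \<xi>) - v))^2))"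
  define Cb where "Cb = (\<lambda>s. sphere_avg (\<lambda>\<xi>. (norm (u (x + s *\<^sub>R \<xi>) - v))^2))"
  define Db where "Db = (\<lambda>s. sphere_avg (\<lambda>\<xi>. \<xi> \<bullet> convective u (x + s *\<^sub>R \<xi>)))"
  define Pb where "Pb = (\<lambda>s. sph_mean p x s)"
  have avgF2: "sphere_avg (\<lambda>\<xi>. \<xi> \<bullet> F2 (x + s *\<^sub>R \<xi>)) = s * Ab s" for s
  proof -
    have pw: "\<xi> \<bullet> F2 (x + s *\<^sub>R \<xi>) = s * (\<xi> \<bullet> (u (x + s *\<^sub>R \<xi>) - v))^2" for \<xi>
    proof -
      define a where "a = \<xi> \<bullet> u (x + s *\<^sub>R \<xi>)"
      define b where "b = \<xi> \<bullet> v"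
      have "\<xi> \<bullet> F2 (x + s *\<^sub>R \<xi>) = (s * (a - b)) * a - (s * b) * (a - b)"
        unfolding a_def b_def by (simp add: F2_def w_def inner_diff_right inner_add_right inner_commute[of v \<xi>] right_diff_distrib)
      also have "\<dots> = s * (a - b)^2" by (simp add: power2_eq_square algebra_simps)
      also have "a - b = \<xi> \<bullet> (u (x + s *\<^sub>R \<xi>) - v)" unfolding a_def b_def by (simp add: inner_diff_right)
      finally show ?thesis .
    qed
    have "sphere_avg (\<lambda>\<xi>. \<xi> \<bullet> F2 (x + s *\<^sub>R \<xi>)) = sphere_avg (\<lambda>\<xi>. s * (\<xi> \<bullet> (u (x + s *\<^sub>R \<xi>) - v))^2)"
      by (simp only: pw)
    then show ?thesis unfolding Ab_def avg_cmult .
  qed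
  have avgG2: "sphere_avg (\<lambda>\<xi>. \<Sum>k\<in>UNIV. G2 k (x + s *\<^sub>R \<xi>) $ k) = Cb s + s * Db s" if s: "s \<in> U" for s
  proof -
    have "sphere_avg (\<lambda>\<xi>. \<Sum>k\<in>UNIV. G2 k (x + s *\<^sub>R \<xi>) $ k)
        = sphere_avg (\<lambda>\<xi>. (norm (u (x + s *\<^sub>R \<xi>) - v))^2 + s * (\<xi> \<bullet> convective u (x + s *\<^sub>R \<xi>)))"
      by (rule avg_cong) (simp add: div2 inS s w_def)
    also have "\<dots> = Cb s + s * Db s"
      unfolding Cb_def Db_def avg_cmult[symmetric]
      by (rule avg_add) (use csph[OF cuv s] csph[OF ccv s] in \<open>auto intro!: continuous_intros\<close>)
    finally show ?thesis .
  qed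
  have dH: "((\<lambda>s. s^3 * Ab s) has_real_derivative s^2 * (Cb s + s * Db s)) (at s)" if s: "s \<in> U" for s
  proof -
    have "((\<lambda>s. s^2 * sphere_avg (\<lambda>\<xi>. \<xi> \<bullet> F2 (x + s *\<^sub>R \<xi>))) has_real_derivative s^2 * (Cb s + s * Db s)) (at s)"
      using V2.flux[of s] s avgG2[OF s] by (simp add: V2.U_def U_def)
    then show ?thesis unfolding avgF2 by (simp add: power2_eq_square power3_eq_cube algebra_simps)
  qed

  define Ad where "Ad = (\<lambda>s. sphere_avg (\<lambda>\<xi>. 2 * (\<xi> \<bullet> (u (x + s *\<^sub>R \<xi>) - v)) * ((\<Sum>k\<in>UNIV. \<xi> $ k *\<^sub>R gu k (x + s *\<^sub>R \<xi>)) \<bullet> \<xi>)))"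
  have dg: "((\<lambda>y. \<xi> \<bullet> (u y - v)) has_derivative (\<lambda>h. (\<Sum>k\<in>UNIV. \<xi> $ k *\<^sub>R gu k y) \<bullet> h)) (at y)" if y: "y \<in> \<Omega>" for \<xi> y
  proof -
    have e: "(\<lambda>y. \<xi> \<bullet> (u y - v)) = (\<lambda>y. \<Sum>k\<in>UNIV. \<xi> $ k * (u y $ k - v $ k))"
      by (simp add: inner_vec_def)
    have "((\<lambda>y. \<Sum>k\<in>UNIV. \<xi> $ k * (u y $ k - v $ k)) has_derivative (\<lambda>h. \<Sum>k\<in>UNIV. \<xi> $ k * (gu k y \<bullet> h - 0))) (at y)"
      by (intro has_derivative_sum has_derivative_mult_right has_derivative_diff du y has_derivative_const)
    moreover have "(\<lambda>h. \<Sum>k\<in>UNIV. \<xi> $ k * (gu k y \<bullet> h - 0)) = (\<lambda>h. (\<Sum>k\<in>UNIV. \<xi> $ k *\<^sub>R gu k y) \<bullet> h)"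
      by (simp add: inner_sum_left)
    ultimately show ?thesis unfolding e by simp
  qed
  have dA: "(Ab has_real_derivative Ad s) (at s)" if s: "s \<in> U" for s
  proof -
    have "((\<lambda>s. sphere_avg (\<lambda>\<xi>. (\<xi> \<bullet> (u (x + s *\<^sub>R \<xi>) - v))^2)) has_real_derivative Ad s) (at s within U)"
      unfolding Ad_def
    proof (rule avg_deriv[OF U_conv s])
      fix t and \<xi> :: "real^3" assume t: "t \<in> U" and \<xi>: "\<xi> \<in> sphere 0 1"
      have "((\<lambda>t. \<xi> \<bullet> (u (x + t *\<^sub>R \<xi>) - v)) has_real_derivative (\<Sum>k\<in>UNIV. \<xi> $ k *\<^sub>R gu k (x + t *\<^sub>R \<xi>)) \<bullet> \<xi>) (at t)"
        using chain_path[where g="\<lambda>y. \<xi> \<bullet> (u y - v)" and \<gamma>="\<lambda>t. x + t *\<^sub>R \<xi>", OF dg[OF inS[OF t \<xi>]] line_vd] by simp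
      from DERIV_power[OF this, of 2]
      show "((\<lambda>t. (\<xi> \<bullet> (u (x + t *\<^sub>R \<xi>) - v))^2) has_real_derivative
          2 * (\<xi> \<bullet> (u (x + t *\<^sub>R \<xi>) - v)) * ((\<Sum>k\<in>UNIV. \<xi> $ k *\<^sub>R gu k (x + t *\<^sub>R \<xi>)) \<bullet> \<xi>)) (at t within U)"
        by (auto intro: has_field_derivative_at_within simp: algebra_simps)
    next
      have "continuous_on (U \<times> sphere 0 1) (\<lambda>z. 2 * (snd z \<bullet> (u (x + fst z *\<^sub>R snd z) - v)) * ((\<Sum>k\<in>UNIV. snd z $ k *\<^sub>R gu k (x + fst z *\<^sub>R snd z)) \<bullet> snd z))"
        using cUS[OF cuv] cUS[OF cgu] by (intro continuous_intros) auto
      then show "continuous_on (U \<times> sphere 0 1) (\<lambda>(t, \<xi>). 2 * (\<xi> \<bullet> (u (x + t *\<^sub>R \<xi>) - v)) * ((\<Sum>k\<in>UNIV. \<xi> $ k *\<^sub>R gu k (x + t *\<^sub>R \<xi>)) \<bullet> \<xi>))"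
        by (simp add: split_beta)
    next
      fix t assume t: "t \<in> U"
      show "continuous_on (sphere 0 1) (\<lambda>\<xi>. (\<xi> \<bullet> (u (x + t *\<^sub>R \<xi>) - v))^2)"
        using csph[OF cuv t] by (intro continuous_intros) auto
    qed
    then show ?thesis unfolding Ab_def using at_within_open[OF s U_open] by simp
  qed
  define Pd where "Pd = (\<lambda>s. sphere_avg (\<lambda>\<xi>. grad p (x + s *\<^sub>R \<xi>) \<bullet> \<xi>))"
  have dP: "(Pb has_real_derivative Pd s) (at s)" if s: "s \<in> U" for s
  proof -
    have "((\<lambda>s. sphere_avg (\<lambda>\<xi>. p (x + s *\<^sub>R \<xi>))) has_real_derivative Pd s) (at s within U)"
      unfolding Pd_def
    proof (rule avg_deriv[OF U_conv s])
      fix t and \<xi> :: "real^3" assume t: "t \<in> U" and \<xi>: "\<xi> \<in> sphere 0 1"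
      have "((\<lambda>t. p (x + t *\<^sub>R \<xi>)) has_real_derivative grad p (x + t *\<^sub>R \<xi>) \<bullet> \<xi>) (at t)"
        using chain_path[where g=p and \<gamma>="\<lambda>t. x + t *\<^sub>R \<xi>", OF C2_d1[OF \<Omega> hp inS[OF t \<xi>]] line_vd] by simp
      then show "((\<lambda>t. p (x + t *\<^sub>R \<xi>)) has_real_derivative grad p (x + t *\<^sub>R \<xi>) \<bullet> \<xi>) (at t within U)"
        by (rule has_field_derivative_at_within)
    next
      have "continuous_on (U \<times> sphere 0 1) (\<lambda>z. grad p (x + fst z *\<^sub>R snd z) \<bullet> snd z)"
        using cUS[OF cgp] by (intro continuous_intros) auto
      then show "continuous_on (U \<times> sphere 0 1) (\<lambda>(t, \<xi>). grad p (x + t *\<^sub>R \<xi>) \<bullet> \<xi>)"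
        by (simp add: split_beta)
    next
      fix t assume t: "t \<in> U"
      show "continuous_on (sphere 0 1) (\<lambda>\<xi>. p (x + t *\<^sub>R \<xi>))" by (rule csph[OF cpp t])
    qed
    then show ?thesis unfolding Pb_def sph_mean_def using at_within_open[OF s U_open] by simp
  qed
  have PdDb: "Pd s = - Db s" if s: "s \<in> U" "s \<noteq> 0" for s
  proof -
    have "0 = sphere_avg (\<lambda>\<xi>. \<xi> \<bullet> F1 (x + s *\<^sub>R \<xi>))" using Phi1 s unfolding U_def by simp
    also have "\<dots> = sphere_avg (\<lambda>\<xi>. \<xi> \<bullet> grad p (x + s *\<^sub>R \<xi>) + \<xi> \<bullet> convective u (x + s *\<^sub>R \<xi>))"
      unfolding F1_def by (simp add: inner_add_right)
    also have "\<dots> = Pd s + Db s"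
      unfolding Pd_def Db_def
      by (subst avg_add) (use csph[OF cgp s(1)] csph[OF ccv s(1)] in \<open>auto intro!: continuous_intros simp: inner_commute\<close>)
    finally show ?thesis by simp
  qed
  have rel: "3 * s^2 * Ab s + s^3 * Ad s = s^2 * (Cb s + s * Db s)" if s: "s \<in> U" for s
  proof -
    have dc: "((\<lambda>s. s^3) has_real_derivative 3 * s^2) (at s)"
      by (auto intro!: derivative_eq_intros)
    have "((\<lambda>s. s^3 * Ab s) has_real_derivative 3 * s^2 * Ab s + Ad s * s^3) (at s)"
      by (rule DERIV_mult[OF dc dA[OF s]])
    from DERIV_unique[OF this dH[OF s]] show ?thesis by (simp add: algebra_simps)
  qed
  define f' where "f' = (\<lambda>\<rho>. (1/\<rho>) * sphere_avg (\<lambda>\<xi>.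
              3 * (\<xi> \<bullet> (u (x + \<rho> *\<^sub>R \<xi>) - v))\<^sup>2 - (norm (u (x + \<rho> *\<^sub>R \<xi>) - v))\<^sup>2))"
  have f'eq: "f' s = (1/s) * (3 * Ab s - Cb s)" if s: "s \<in> U" for s
  proof -
    have "sphere_avg (\<lambda>\<xi>. 3 * (\<xi> \<bullet> (u (x + s *\<^sub>R \<xi>) - v))\<^sup>2 - (norm (u (x + s *\<^sub>R \<xi>) - v))\<^sup>2)
        = sphere_avg (\<lambda>\<xi>. 3 * (\<xi> \<bullet> (u (x + s *\<^sub>R \<xi>) - v))\<^sup>2) - Cb s"
      unfolding Cb_def
      by (rule avg_diff) (use csph[OF cuv s] in \<open>auto intro!: continuous_intros\<close>)
    then show ?thesis unfolding f'_def Ab_def avg_cmult by simp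
  qed
  define E where "E = (\<lambda>s. - (Pb s + Ab s))"
  have dE: "(E has_real_derivative f' s) (at s)" if s: "s \<in> {0<..<r}" for s
  proof -
    have sU: "s \<in> U" using s rU by auto
    have spos: "s > 0" using s by simp
    have "(E has_real_derivative - (Pd s + Ad s)) (at s)"
      unfolding E_def by (intro DERIV_minus DERIV_add dP dA sU)
    moreover have "- (Pd s + Ad s) = f' s"
    proof -
      have r1: "s^2 * (3 * Ab s + s * Ad s) = s^2 * (Cb s + s * Db s)"
        using rel[OF sU] by (simp add: power2_eq_square power3_eq_cube algebra_simps)
      then have h1: "3 * Ab s + s * Ad s = Cb s + s * Db s" using spos by simp
      have h2: "f' s * s = 3 * Ab s - Cb s" using f'eq[OF sU] spos by (simp add: field_simps)
      have "s * (Ad s + f' s - Db s) = 0" using h1 h2 by algebra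
      then have "Ad s + f' s - Db s = 0" using spos by simp
      then show ?thesis using PdDb[OF sU] spos by simp
    qed
    ultimately show ?thesis by simp
  qed
  have cE: "continuous_on {0..r} E"
  proof (rule continuous_at_imp_continuous_on, rule ballI)
    fix s assume "s \<in> {0..r}"
    then have sU: "s \<in> U" using rU by auto
    have "(E has_real_derivative - (Pd s + Ad s)) (at s)"
      unfolding E_def by (intro DERIV_minus DERIV_add dP dA sU)
    then show "isCont E s" by (rule DERIV_isCont)
  qed
  have "(f' has_integral E r - E 0) {0..r}"
    by (rule fundamental_theorem_of_calculus_interior[OF _ cE])
       (use assms(3) dE in \<open>auto simp: has_real_derivative_iff_has_vector_derivative[symmetric]\<close>)
  then have int: "integral {0..r} f' = E r - E 0" by (rule integral_unique)
  have P0: "Pb 0 = p x" unfolding Pb_def sph_mean_def by (simp add: avg_const)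
  have A0: "Ab 0 = (norm (u x - v))^2 / 3" unfolding Ab_def by (simp add: avg_sq)
  show ?thesis
    using int P0 A0 unfolding f'_def E_def Pb_def Ab_def by simp
qed


end
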